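(* Let $m=p_1^{\alpha_1}p_2^{\alpha_2}$, where $p_1,p_2>2$ are distinct primes and $\alpha_1,\alpha_2$ are positive integers. Let $t=\mathrm{ord}_m(2)$ and let $\gamma\in\mathbb{F}_{2^t}^*$ be a primitive $m$th root of unity. Let $\rho(z_1,z_2)=(1+z_2^{-1})(1+z_1^{-1})^{-1}$ and let $$\mathcal{D}=\{(z_1,z_2)\in(\mathbb{F}_{2^t}^*\setminus\{1\})^2:\ \mathrm{ord}(z_1)\mid p_1^{\alpha_1},\ \mathrm{ord}(z_2)\mid p_2^{\alpha_2}\},$$ where $\mathrm{ord}(z)$ denotes the multiplicative order of $z$ in $\mathbb{F}_{2^t}^*$. Then $m$ is good if and only if $\rho$ is not injective on $\mathcal{D}$.
   Context: $\mathrm{ord}_m(2)$ is the multiplicative order of $2$ modulo $m$. The canonical set of $m$ is $S_m=\{s_{01},s_{10},s_{11}\}\subseteq\mathbb{Z}_m$, where for $\sigma=(\sigma_1,\sigma_2)\in\{0,1\}^2\setminus\{(0,0)\}$, $s_\sigma$ is the unique element of $\mathbb{Z}_m$ with $s_\sigma\equiv\sigma_1 \pmod{p_1^{\alpha_1}}$ and $s_\sigma\equiv \sigma_2\pmod{p_2^{\alpha_2}}$ (so $s_{11}=1$). An $S_m$-decoding polynomial is a polynomial $P(X)\in\mathbb{F}_{2^t}[X]$ such that $P(\gamma^s)=0$ for every $s\in S_m$ and $P(1)=1$. The number $m$ is called good if there exists an $S_m$-decoding polynomial with fewer than $4$ monomials (nonzero terms). *)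

theory Defs
  imports "HOL-Number_Theory.Number_Theory" "HOL-Computational_Algebra.Polynomial"
begin

definition elem_ord :: "'a::field \<Rightarrow> nat" where
  "elem_ord z = (if \<exists>n>0. z ^ n = 1 then (LEAST n. n > 0 \<and> z ^ n = 1) else 0)"

text \<open>Canonical set S_m, as a set of residues in {0..<m}: for m = q1*q2 with coprime q1,q2,
  s_sigma is the element of Z_m congruent to sigma1 mod q1 and sigma2 mod q2.\<close>
definition canonical_elem :: "nat \<Rightarrow> nat \<Rightarrow> nat \<Rightarrow> nat \<Rightarrow> nat" where
  "canonical_elem q1 q2 a b = (THE s. s < q1 * q2 \<and> s mod q1 = a \<and> s mod q2 = b)"

definition canonical_set :: "nat \<Rightarrow> nat \<Rightarrow> nat set" where
  "canonical_set q1 q2 = {canonical_elem q1 q2 0 1, canonical_elem q1 q2 1 0, canonical_elem q1 q2 1 1}"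

definition num_monomials :: "'a::zero poly \<Rightarrow> nat" where
  "num_monomials P = card {i. coeff P i \<noteq> 0}"

definition decoding_poly :: "'a::field \<Rightarrow> nat set \<Rightarrow> 'a poly \<Rightarrow> bool" where
  "decoding_poly \<gamma> S P \<longleftrightarrow> (\<forall>s\<in>S. poly P (\<gamma> ^ s) = 0) \<and> poly P 1 = 1"

definition good :: "'a::field \<Rightarrow> nat \<Rightarrow> nat \<Rightarrow> bool" where
  "good \<gamma> q1 q2 \<longleftrightarrow> (\<exists>P. decoding_poly \<gamma> (canonical_set q1 q2) P \<and> num_monomials P < 4)"

definition rho :: "'a::field \<times> 'a \<Rightarrow> 'a" where
  "rho = (\<lambda>(z1, z2). (1 + inverse z2) * inverse (1 + inverse z1))"

end

theory Submission
  imports Defs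
begin


lemma sys_fwd:
  fixes z1 z2 w1 w2 a b c :: "'a::field"
  assumes two: "(2::'a) = 0"
    and e0: "a+b+c = 1" and e1: "a + b*z1 + c*w1 = 0" and e2: "a+b*z2+c*w2=0"
    and e3: "a + b*(z1*z2) + c*(w1*w2) = 0"
  shows "c*(1+w1)*((1+z2)+(1+w2)) = z2 \<and> b*(1+z1)*((1+z2)+(1+w2)) = w2 \<and>
        c*(1+w2)*((1+z1)+(1+w1)) = z1 \<and> b*(1+z2)*((1+z1)+(1+w1)) = w1 \<and>
        (1+z2)*z1*(1+w1)*w2 = (1+w2)*w1*(1+z1)*z2"
proof -
  have H0: "a+b+c-1 = 0" using e0 by simp
  have "c*(1+w1)*((1+z2)+(1+w2)) - z2 = (1+z2)*((a + b*z1 + c*w1) - (a+b+c-1)) - ((a+b+c-1)+(a + b*z1 + c*w1)+(a+b*z2+c*w2)+(a + b*(z1*z2) + c*(w1*w2))) + 2 * (-1 - z2 + 2*c + c*w2 + c*w1 + c*w1*w2 + c*z2 + b + b*z2 + 2*a)" by (simp add: algebra_simps)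
  also have "\<dots> = 0" by (simp only: H0 e1 e2 e3 two diff_self add_0 add_0_right mult_zero_left mult_zero_right diff_0_right diff_zero)
  finally have G1: "c*(1+w1)*((1+z2)+(1+w2)) = z2" by simp
  have "b*(1+z1)*((1+z2)+(1+w2)) - w2 = (1+w2)*((a + b*z1 + c*w1) - (a+b+c-1)) - ((a+b+c-1)+(a + b*z1 + c*w1)+(a+b*z2+c*w2)+(a + b*(z1*z2) + c*(w1*w2))) + 2 * (-1 - w2 + c + c*w2 + 2*b + b*w2 + b*z2 + b*z1 + b*z1*z2 + 2*a)" by (simp add: algebra_simps)
  also have "\<dots> = 0" by (simp only: H0 e1 e2 e3 two diff_self add_0 add_0_right mult_zero_left mult_zero_right diff_0_right diff_zero)
  finally have G2: "b*(1+z1)*((1+z2)+(1+w2)) = w2" by simp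
  have "c*(1+w2)*((1+z1)+(1+w1)) - z1 = (1+z1)*((a+b*z2+c*w2) - (a+b+c-1)) - ((a+b+c-1)+(a + b*z1 + c*w1)+(a+b*z2+c*w2)+(a + b*(z1*z2) + c*(w1*w2))) + 2 * (-1 - z1 + 2*c + c*w2 + c*w1 + c*w1*w2 + c*z1 + b + b*z1 + 2*a)" by (simp add: algebra_simps)
  also have "\<dots> = 0" by (simp only: H0 e1 e2 e3 two diff_self add_0 add_0_right mult_zero_left mult_zero_right diff_0_right diff_zero)
  finally have G3: "c*(1+w2)*((1+z1)+(1+w1)) = z1" by simp
  have "b*(1+z2)*((1+z1)+(1+w1)) - w1 = (1+w1)*((a+b*z2+c*w2) - (a+b+c-1)) - ((a+b+c-1)+(a + b*z1 + c*w1)+(a+b*z2+c*w2)+(a + b*(z1*z2) + c*(w1*w2))) + 2 * (-1 - w1 + c + c*w1 + 2*b + b*w1 + b*z2 + b*z1 + b*z1*z2 + 2*a)" by (simp add: algebra_simps)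
  also have "\<dots> = 0" by (simp only: H0 e1 e2 e3 two diff_self add_0 add_0_right mult_zero_left mult_zero_right diff_0_right diff_zero)
  finally have G4: "b*(1+z2)*((1+z1)+(1+w1)) = w1" by simp
  have "(1+z2)*z1*(1+w1)*w2 - (1+w2)*w1*(1+z1)*z2 = - ((1+z1)+(1+w1))*(1+w2)*(c*(1+w1)*((1+z2)+(1+w2)) - z2) + (1+w1)*((1+z2)+(1+w2))*(c*(1+w2)*((1+z1)+(1+w1)) - z1) + 2 * (-z2 - z2*w2 - z2*w1 - z2*w1*w2 + z1 + z1*w2 + z1*w1 + z1*w1*w2)" by (simp add: algebra_simps)
  also have "\<dots> = 0" using G1 G3 two by simp
  finally have G5: "(1+z2)*z1*(1+w1)*w2 = (1+w2)*w1*(1+z1)*z2" by simp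
  show ?thesis using G1 G2 G3 G4 G5 by blast
qed

lemma sys_bwd:
  fixes z1 z2 w1 w2 :: "'a::field"
  assumes two: "(2::'a) = 0" and nz: "z1 \<noteq> 1" "w1 \<noteq> 1" "z2 \<noteq> w2"
    and E: "(1+z2)*z1*(1+w1)*w2 = (1+w2)*w1*(1+z1)*z2"
  shows "\<exists>a b c. a+b+c = 1 \<and> a + b*z1 + c*w1 = 0 \<and> a+b*z2+c*w2=0 \<and> a + b*(z1*z2) + c*(w1*w2) = 0"
proof -
  have m: "x = - x" for x :: 'a using two by (metis add_eq_0_iff2 mult_2 mult_zero_left)
  have S: "z2 + w2 \<noteq> 0" using nz(3) m by (metis add_eq_0_iff2)
  have A1: "1 + z1 \<noteq> 0" using nz(1) m by (metis add_eq_0_iff2)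
  have B1: "1 + w1 \<noteq> 0" using nz(2) m by (metis add_eq_0_iff2)
  define D1 where "D1 = (1+z1)*(z2+w2)"
  define D2 where "D2 = (1+w1)*(z2+w2)"
  have D: "D1 * D2 \<noteq> 0" unfolding D1_def D2_def using S A1 B1 by simp
  define b where "b = w2/D1"
  define c where "c = z2/D2"
  define a where "a = 1 + b + c"
  have bD: "b * D1 = w2" unfolding b_def using D by auto
  have cD: "c * D2 = z2" unfolding c_def using D by auto
  have "a+b+c = 1 + 2*(b+c)" unfolding a_def by (simp add: algebra_simps)
  hence "a+b+c = 1" using two by simp
  have Ed: "(1+z2)*z1*(1+w1)*w2 - (1+w2)*w1*(1+z1)*z2 = 0" using E by simp
  have X1: "(a + b*z1 + c*w1) * (D1 * D2) = 0"
  proof -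
  have "(a + b*z1 + c*w1) * (D1 * D2) = D1 * D2 + (b * D1) * (1 + z1) * D2 + (c * D2) * (1 + w1) * D1"
    unfolding a_def by (simp add: algebra_simps)
  also have "\<dots> = D1 * D2 + w2 * (1 + z1) * D2 + z2 * (1 + w1) * D1" by (simp only: bD cD)
  also have "\<dots> = (1 + z1) * (1 + w1) * (z2 + w2) * (2 * (z2 + w2))" unfolding D1_def D2_def
    by (simp add: algebra_simps)
  also have "\<dots> = 0" using two by simp
  finally show ?thesis .
  qed
  hence h1: "a + b*z1 + c*w1 = 0" using D by simp
  have X2: "(a + b*z2 + c*w2) * (D1 * D2) = 0"
  proof -
  have "(a + b*z2 + c*w2) * (D1 * D2) = D1 * D2 + (b * D1) * (1 + z2) * D2 + (c * D2) * (1 + w2) * D1"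
    unfolding a_def by (simp add: algebra_simps)
  also have "\<dots> = D1 * D2 + w2 * (1 + z2) * D2 + z2 * (1 + w2) * D1" by (simp only: bD cD)
  also have "\<dots> = (z2 + w2) * (((1+z2)*z1*(1+w1)*w2 - (1+w2)*w1*(1+z1)*z2)
      + 2 * (z2+w2+z1*z2+w1*w2+z2*w2+w1*z2+z1*w1*z2+w1*z2*w2))" unfolding D1_def D2_def
    by (simp add: algebra_simps)
  also have "\<dots> = 0" by (simp only: Ed two mult_zero_left mult_zero_right add_0)
  finally show ?thesis .
  qed
  hence h2: "a + b*z2 + c*w2 = 0" using D by simp
  have X3: "(a + b*(z1*z2) + c*(w1*w2)) * (D1 * D2) = 0"
  proof -
  have "(a + b*(z1*z2) + c*(w1*w2)) * (D1 * D2) = D1 * D2 + (b * D1) * (1 + z1*z2) * D2 + (c * D2) * (1 + w1*w2) * D1"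
    unfolding a_def by (simp add: algebra_simps)
  also have "\<dots> = D1 * D2 + w2 * (1 + z1*z2) * D2 + z2 * (1 + w1*w2) * D1" by (simp only: bD cD)
  also have "\<dots> = (z2 + w2) * (((1+z2)*z1*(1+w1)*w2 - (1+w2)*w1*(1+z1)*z2)
      + 2 * (z2+w2+z1*z2+w1*z2+w1*w2+z1*w1*z2+w1*w2*z2+z1*z2*w1*w2))" unfolding D1_def D2_def
    by (simp add: algebra_simps)
  also have "\<dots> = 0" by (simp only: Ed two mult_zero_left mult_zero_right add_0)
  finally show ?thesis .
  qed
  hence h3: "a + b*(z1*z2) + c*(w1*w2) = 0" using D by simp
  show ?thesis using h1 h2 h3 \<open>a+b+c = 1\<close> by blast
qed


lemma elem_ord_basic:
  fixes z :: "'a::field"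
  assumes "elem_ord z > 0"
  shows "z ^ elem_ord z = 1" "\<And>n. 0 < n \<Longrightarrow> n < elem_ord z \<Longrightarrow> z ^ n \<noteq> 1"
proof -
  have ex: "\<exists>n>0. z ^ n = 1" using assms unfolding elem_ord_def by (auto split: if_splits)
  hence d: "elem_ord z = (LEAST n. n > 0 \<and> z ^ n = 1)" unfolding elem_ord_def by simp
  show "z ^ elem_ord z = 1" unfolding d using LeastI_ex[OF ex] by blast
  show "\<And>n. 0 < n \<Longrightarrow> n < elem_ord z \<Longrightarrow> z ^ n \<noteq> 1" unfolding d using not_less_Least by blast
qed

lemma pow_mod_eq:
  fixes z :: "'a::field"
  assumes "z ^ q = 1"
  shows "z ^ n = z ^ (n mod q)"
proof -
  have "n = q * (n div q) + n mod q" by simp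
  hence "z ^ n = z ^ (q * (n div q) + n mod q)" by (metis)
  also have "\<dots> = (z ^ q) ^ (n div q) * z ^ (n mod q)" by (simp only: power_add power_mult)
  also have "\<dots> = z ^ (n mod q)" using assms by simp
  finally show ?thesis .
qed

lemma elem_ord_dvd:
  fixes z :: "'a::field"
  assumes "n > 0" "z ^ n = 1"
  shows "elem_ord z > 0" "elem_ord z dvd n"
proof -
  have ex: "\<exists>n>0. z ^ n = 1" using assms by blast
  show pos: "elem_ord z > 0" unfolding elem_ord_def using ex LeastI_ex[OF ex] by auto
  have "z ^ (n mod elem_ord z) = 1" using pow_mod_eq[OF elem_ord_basic(1)[OF pos], of n] assms by simp
  hence "n mod elem_ord z = 0" using elem_ord_basic(2)[OF pos, of "n mod elem_ord z"] pos
    by (meson mod_less_divisor neq0_conv)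
  thus "elem_ord z dvd n" by (simp add: dvd_eq_mod_eq_0)
qed

lemma elem_ord_pow_eq:
  fixes z :: "'a::field"
  assumes "elem_ord z dvd n" "n > 0"
  shows "z ^ n = 1"
proof -
  have pos: "elem_ord z > 0" using assms by (metis dvd_0_left_iff gr0I less_numeral_extra(3))
  obtain k where "n = elem_ord z * k" using assms by blast
  thus ?thesis by (simp add: power_mult elem_ord_basic(1)[OF pos])
qed

lemma gamma_powers:
  fixes \<gamma> t :: "'a::field"
  assumes "elem_ord \<gamma> = m" "m > 0" "t ^ m = 1"
  shows "\<exists>u. t = \<gamma> ^ u"
proof -
  have pos: "elem_ord \<gamma> > 0" using assms by simp
  have inj: "inj_on (\<lambda>i. \<gamma> ^ i) {..<m}"
  proof (rule inj_onI, rule ccontr)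
    fix i j assume ij: "i \<in> {..<m}" "j \<in> {..<m}" "\<gamma> ^ i = \<gamma> ^ j" "i \<noteq> j"
    have g0: "\<gamma> \<noteq> 0" using elem_ord_basic(1)[OF pos] assms by (metis zero_neq_one power_0_left neq0_conv)
    have "\<exists>a b. a < b \<and> b < m \<and> \<gamma> ^ a = \<gamma> ^ b" using ij by (metis lessThan_iff linorder_neqE_nat)
    then obtain a b where ab: "a < b" "b < m" "\<gamma> ^ a = \<gamma> ^ b" by blast
    have "\<gamma> ^ b = \<gamma> ^ a * \<gamma> ^ (b - a)" using ab by (metis power_add le_add_diff_inverse less_imp_le)
    hence "\<gamma> ^ (b - a) = 1" using ab g0 by simp
    thus False using elem_ord_basic(2)[OF pos, of "b - a"] ab assms by simp
  qed
  define p :: "'a poly" where "p = monom 1 m + [:-1:]"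
  have dp: "degree p = m" unfolding p_def using assms(2)
    by (subst degree_add_eq_left) (simp_all add: degree_monom_eq)
  have p0: "p \<noteq> 0" using dp assms(2) by auto
  let ?R = "{x. poly p x = 0}"
  have fin: "finite ?R" using poly_roots_finite[OF p0] .
  have cR: "card ?R \<le> m" using card_poly_roots_bound[OF p0] dp by simp
  have sub: "(\<lambda>i. \<gamma> ^ i) ` {..<m} \<subseteq> ?R"
  proof
    fix x assume "x \<in> (\<lambda>i. \<gamma> ^ i) ` {..<m}"
    then obtain i where "x = \<gamma> ^ i" by blast
    hence "x ^ m = 1" using elem_ord_basic(1)[OF pos] assms(1)
      by (metis mult.commute power_mult power_one)
    thus "x \<in> ?R" unfolding p_def by (simp add: poly_monom)
  qed
  have cG: "card ((\<lambda>i. \<gamma> ^ i) ` {..<m}) = m" using card_image[OF inj] by simp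
  have eq: "(\<lambda>i. \<gamma> ^ i) ` {..<m} = ?R"
    using card_subset_eq[OF fin sub] cG cR by (metis card_mono fin le_antisym sub card_seteq)
  have "t \<in> ?R" unfolding p_def using assms(3) by (simp add: poly_monom)
  thus ?thesis using eq by blast
qed

lemma canon:
  fixes q1 q2 :: nat
  assumes "coprime q1 q2" "q1 > 0" "q2 > 0" "a < q1" "b < q2"
  shows "canonical_elem q1 q2 a b < q1 * q2 \<and> canonical_elem q1 q2 a b mod q1 = a
       \<and> canonical_elem q1 q2 a b mod q2 = b"
proof -
  have "\<exists>!x. x < q1 * q2 \<and> [x = a] (mod q1) \<and> [x = b] (mod q2)"
    using binary_chinese_remainder_unique_nat[OF assms(1)] assms by simp
  hence "\<exists>!x. x < q1 * q2 \<and> x mod q1 = a \<and> x mod q2 = b"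
    using assms by (simp add: cong_def)
  thus ?thesis unfolding canonical_elem_def by (rule theI')
qed

lemma canon11:
  fixes q1 q2 :: nat
  assumes "coprime q1 q2" "q1 > 1" "q2 > 1"
  shows "canonical_elem q1 q2 1 1 = 1"
proof -
  have "\<exists>!x. x < q1 * q2 \<and> [x = 1] (mod q1) \<and> [x = 1] (mod q2)"
    using binary_chinese_remainder_unique_nat[OF assms(1)] assms by simp
  hence u: "\<exists>!x. x < q1 * q2 \<and> x mod q1 = 1 \<and> x mod q2 = 1"
    using assms by (simp add: cong_def)
  have "(1::nat) < q1 * q2" using assms by (metis less_1_mult)
  hence "1 < q1 * q2 \<and> 1 mod q1 = 1 \<and> 1 mod q2 = 1" using assms by simp
  thus ?thesis unfolding canonical_elem_def using u by (metis (mono_tags, lifting) the_equality)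
qed

lemma rho_eq:
  fixes z1 z2 w1 w2 :: "'a::field"
  assumes two: "(2::'a) = 0" and nz: "z1 \<noteq> 0" "z2 \<noteq> 0" "w1 \<noteq> 0" "w2 \<noteq> 0"
    and n1: "z1 \<noteq> 1" "w1 \<noteq> 1"
  shows "rho (z1, z2) = rho (w1, w2) \<longleftrightarrow> (1+z2)*z1*(1+w1)*w2 = (1+w2)*w1*(1+z1)*z2"
proof -
  have m: "x = - x" for x :: 'a using two by (metis add_eq_0_iff2 mult_2 mult_zero_left)
  have A1: "1 + z1 \<noteq> 0" using n1(1) m by (metis add_eq_0_iff2)
  have B1: "1 + w1 \<noteq> 0" using n1(2) m by (metis add_eq_0_iff2)
  have r: "rho (x, y) = (1+y)*x/(y*(1+x))" if "x \<noteq> 0" "y \<noteq> 0" "1 + x \<noteq> 0" for x y :: 'a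
    unfolding rho_def using that by (simp add: field_simps)
  have d1: "z2*(1+z1) \<noteq> 0" "w2*(1+w1) \<noteq> 0" using nz A1 B1 by auto
  have "rho (z1, z2) = rho (w1, w2) \<longleftrightarrow> (1+z2)*z1 * (w2*(1+w1)) = (1+w2)*w1 * (z2*(1+z1))"
    unfolding r[OF nz(1,2) A1] r[OF nz(3,4) B1] using frac_eq_eq[OF d1] by simp
  also have "\<dots> \<longleftrightarrow> (1+z2)*z1*(1+w1)*w2 = (1+w2)*w1*(1+z1)*z2" by (simp add: ac_simps)
  finally show ?thesis .
qed



lemma poly_sum_superset:
  fixes P :: "'a::comm_semiring_1 poly"
  assumes "finite J" "{i. coeff P i \<noteq> 0} \<subseteq> J"
  shows "poly P t = (\<Sum>n\<in>J. coeff P n * t ^ n)"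
proof -
  have "poly P t = (\<Sum>n\<le>degree P. coeff P n * t ^ n)" by (rule poly_altdef)
  also have "\<dots> = (\<Sum>n\<in>{..degree P} \<union> J. coeff P n * t ^ n)"
    by (rule sum.mono_neutral_left) (use assms in \<open>auto intro!: le_degree\<close>)
  also have "\<dots> = (\<Sum>n\<in>J. coeff P n * t ^ n)"
    by (rule sum.mono_neutral_right) (use assms in force)+
  finally show ?thesis .
qed

lemma three_superset:
  fixes I :: "nat set"
  assumes "finite I" "card I \<le> 3"
  shows "\<exists>i j k. I \<subseteq> {i, j, k} \<and> i \<noteq> j \<and> j \<noteq> k \<and> i \<noteq> k"
proof -
  have "infinite (UNIV - I)" using assms(1) by (simp add: infinite_UNIV_nat Diff_infinite_finite)
  then obtain B where B: "B \<subseteq> UNIV - I" "finite B" "card B = 3 - card I"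
    using infinite_arbitrarily_large by blast
  have "card (I \<union> B) = 3" using B assms by (subst card_Un_disjoint) auto
  then obtain i j k where "I \<union> B = {i,j,k}" "i \<noteq> j" "j \<noteq> k" "i \<noteq> k" by (auto simp: card_3_iff)
  thus ?thesis by blast
qed



theorem theorem2:
  fixes p1 p2 a1 a2 m t :: nat and \<gamma> :: "'a::{field,finite}"
  assumes "prime p1" "prime p2" "p1 > 2" "p2 > 2" "p1 \<noteq> p2"
    and "a1 > 0" "a2 > 0"
    and "m = p1 ^ a1 * p2 ^ a2"
    and "t = ord m 2"
    and "CHAR('a) = 2" "card (UNIV :: 'a set) = 2 ^ t"
    and "elem_ord \<gamma> = m"
  shows "good \<gamma> (p1 ^ a1) (p2 ^ a2) \<longleftrightarrow>
    \<not> inj_on rho {(z1 :: 'a, z2 :: 'a). z1 \<noteq> 0 \<and> z1 \<noteq> 1 \<and> z2 \<noteq> 0 \<and> z2 \<noteq> 1 \<and>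
                        elem_ord z1 dvd p1 ^ a1 \<and> elem_ord z2 dvd p2 ^ a2}"
proof -
  define q1 where "q1 = p1 ^ a1"
  define q2 where "q2 = p2 ^ a2"
  define D where "D = {(z1 :: 'a, z2 :: 'a). z1 \<noteq> 0 \<and> z1 \<noteq> 1 \<and> z2 \<noteq> 0 \<and> z2 \<noteq> 1 \<and>
                        elem_ord z1 dvd q1 \<and> elem_ord z2 dvd q2}"
  have q1g: "q1 > 1" unfolding q1_def using assms(3,6) one_less_power[of p1 a1] by simp
  have q2g: "q2 > 1" unfolding q2_def using assms(4,7) one_less_power[of p2 a2] by simp
  have cop: "coprime q1 q2" unfolding q1_def q2_def
    using primes_coprime[OF assms(1,2,5)] by simp
  have mq: "m = q1 * q2" unfolding q1_def q2_def using assms(8) by simp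
  have m1: "m > 1" using mq q1g q2g by (metis less_1_mult)
  have two: "(2::'a) = 0" using of_nat_CHAR[where 'a='a] assms(10) by simp
  have gpos: "elem_ord \<gamma> > 0" using assms(12) m1 by simp
  have gm: "\<gamma> ^ m = 1" using elem_ord_basic(1)[OF gpos] assms(12) by simp
  have g0: "\<gamma> \<noteq> 0" using gm m1 by (metis zero_neq_one power_0_left not_one_less_zero)
  have gdvd: "\<gamma> ^ n = 1" if md: "m dvd n" for n
  proof -
    obtain k where "n = m * k" using md by blast
    thus ?thesis by (simp add: power_mult gm)
  qed
  define s10 where "s10 = canonical_elem q1 q2 1 0"
  define s01 where "s01 = canonical_elem q1 q2 0 1"
  have c10: "s10 mod q1 = 1" "s10 mod q2 = 0"
    using canon[OF cop, of 1 0] q1g q2g unfolding s10_def by auto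
  have c01: "s01 mod q1 = 0" "s01 mod q2 = 1"
    using canon[OF cop, of 0 1] q1g q2g unfolding s01_def by auto
  have c11: "canonical_elem q1 q2 1 1 = 1" using canon11[OF cop q1g q2g] .
  have CS: "canonical_set q1 q2 = {s01, s10, 1}"
    unfolding canonical_set_def s01_def s10_def c11 by auto
  have K1: "z ^ s10 = z" "z ^ s01 = 1" if "z ^ q1 = 1" for z :: 'a
    using pow_mod_eq[OF that, of s10] pow_mod_eq[OF that, of s01] c10 c01 by auto
  have K2: "z ^ s10 = 1" "z ^ s01 = z" if "z ^ q2 = 1" for z :: 'a
    using pow_mod_eq[OF that, of s10] pow_mod_eq[OF that, of s01] c10 c01 by auto
  define x where "x = \<gamma> ^ s10"
  define y where "y = \<gamma> ^ s01"
  have xq: "x ^ q1 = 1"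
  proof -
    have "q2 dvd s10" using c10 by (simp add: dvd_eq_mod_eq_0)
    hence "m dvd s10 * q1" unfolding mq by (simp add: mult.commute mult_dvd_mono)
    thus ?thesis unfolding x_def by (simp add: power_mult[symmetric] gdvd)
  qed
  have yq: "y ^ q2 = 1"
  proof -
    have "q1 dvd s01" using c01 by (simp add: dvd_eq_mod_eq_0)
    hence "m dvd s01 * q2" unfolding mq by (simp add: mult_dvd_mono)
    thus ?thesis unfolding y_def by (simp add: power_mult[symmetric] gdvd)
  qed
  have xy: "x * y = \<gamma>"
  proof -
    have "[s10 + s01 = 1] (mod q1)" unfolding cong_def
      using c10 c01 by (metis mod_add_eq add_0_right)
    moreover have "[s10 + s01 = 1] (mod q2)" unfolding cong_def
      using c10 c01 by (metis mod_add_eq add_0)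
    ultimately have "[s10 + s01 = 1] (mod m)" unfolding mq using cop coprime_cong_mult_nat by blast
    hence "(s10 + s01) mod m = 1" using m1 by (simp add: cong_def)
    hence "\<gamma> ^ (s10 + s01) = \<gamma>" using pow_mod_eq[OF gm, of "s10 + s01"] by simp
    thus ?thesis unfolding x_def y_def by (simp add: power_add)
  qed
  have x0: "x \<noteq> 0" and y0: "y \<noteq> 0" unfolding x_def y_def using g0 by auto
  have "good \<gamma> q1 q2 \<longleftrightarrow> \<not> inj_on rho D"
  proof
    assume "good \<gamma> q1 q2"
    then obtain P where dec: "decoding_poly \<gamma> (canonical_set q1 q2) P" and nm: "num_monomials P < 4"
      unfolding good_def by blast
    define I where "I = {i. coeff P i \<noteq> 0}"
    have finI: "finite I" unfolding I_def
      by (rule finite_subset[of _ "{..degree P}"]) (auto intro: le_degree)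
    have cI: "card I \<le> 3" using nm unfolding num_monomials_def I_def by simp
    obtain i j k where ijk: "I \<subseteq> {i, j, k}" "i \<noteq> j" "j \<noteq> k" "i \<noteq> k"
      using three_superset[OF finI cI] by blast
    define a where "a = coeff P i"
    define b where "b = coeff P j"
    define c where "c = coeff P k"
    have ev: "poly P s = a * s ^ i + b * s ^ j + c * s ^ k" for s
    proof -
      have "poly P s = (\<Sum>n\<in>{i,j,k}. coeff P n * s ^ n)"
        by (rule poly_sum_superset) (use ijk I_def in auto)
      thus ?thesis using ijk unfolding a_def b_def c_def by (simp add: add.assoc)
    qed
    have e0: "a + b + c = 1" using dec ev[of 1] unfolding decoding_poly_def by simp
    have Ex: "a * x ^ i + b * x ^ j + c * x ^ k = 0"
      using dec ev[of x] unfolding decoding_poly_def CS x_def by simp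
    have Ey: "a * y ^ i + b * y ^ j + c * y ^ k = 0"
      using dec ev[of y] unfolding decoding_poly_def CS y_def by simp
    have Eg: "a * \<gamma> ^ i + b * \<gamma> ^ j + c * \<gamma> ^ k = 0"
      using dec ev[of \<gamma>] unfolding decoding_poly_def CS by simp
    define z1 where "z1 = x ^ j / x ^ i"
    define w1 where "w1 = x ^ k / x ^ i"
    define z2 where "z2 = y ^ j / y ^ i"
    define w2 where "w2 = y ^ k / y ^ i"
    have xi: "x ^ i \<noteq> 0" and yi: "y ^ i \<noteq> 0" using x0 y0 by auto
    have e1: "a + b * z1 + c * w1 = 0"
    proof -
      have "a + b * z1 + c * w1 = (a * x ^ i + b * x ^ j + c * x ^ k) / x ^ i"
        unfolding z1_def w1_def using xi x0 by (simp add: field_simps)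
      thus ?thesis using Ex by simp
    qed
    have e2: "a + b * z2 + c * w2 = 0"
    proof -
      have "a + b * z2 + c * w2 = (a * y ^ i + b * y ^ j + c * y ^ k) / y ^ i"
        unfolding z2_def w2_def using yi y0 by (simp add: field_simps)
      thus ?thesis using Ey by simp
    qed
    have e3: "a + b * (z1 * z2) + c * (w1 * w2) = 0"
    proof -
      have "a + b * (z1 * z2) + c * (w1 * w2) = (a * \<gamma> ^ i + b * \<gamma> ^ j + c * \<gamma> ^ k) / (x ^ i * y ^ i)"
        unfolding z1_def w1_def z2_def w2_def xy[symmetric] using xi yi x0 y0
        by (simp add: field_simps power_mult_distrib)
      thus ?thesis using Eg by simp
    qed
    have G: "c*(1+w1)*((1+z2)+(1+w2)) = z2 \<and> b*(1+z1)*((1+z2)+(1+w2)) = w2 \<and>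
        c*(1+w2)*((1+z1)+(1+w1)) = z1 \<and> b*(1+z2)*((1+z1)+(1+w1)) = w1 \<and>
        (1+z2)*z1*(1+w1)*w2 = (1+w2)*w1*(1+z1)*z2"
      using sys_fwd[OF two e0 e1 e2 e3] .
    have nz: "z1 \<noteq> 0" "z2 \<noteq> 0" "w1 \<noteq> 0" "w2 \<noteq> 0"
      unfolding z1_def z2_def w1_def w2_def using x0 y0 by auto
    have one: "(1::'a) + 1 = 0" using two by simp
    have n1: "z1 \<noteq> 1" "w1 \<noteq> 1" "z2 \<noteq> 1" "w2 \<noteq> 1" "z1 \<noteq> w1"
      using G nz one by (auto simp: mult_2[symmetric])
    have pw: "(u / v) ^ q = 1" if "u ^ q = 1" "v ^ q = 1" for u v :: 'a and q
      using that by (simp add: power_divide)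
    have xq': "(x ^ n) ^ q1 = 1" for n by (metis power_mult mult.commute xq power_one)
    have yq': "(y ^ n) ^ q2 = 1" for n by (metis power_mult mult.commute yq power_one)
    have o: "elem_ord z1 dvd q1" "elem_ord w1 dvd q1" "elem_ord z2 dvd q2" "elem_ord w2 dvd q2"
      unfolding z1_def w1_def z2_def w2_def
      using elem_ord_dvd(2) q1g q2g pw xq' yq' by (metis less_trans zero_less_one)+
    have r: "rho (z1, z2) = rho (w1, w2)"
      using rho_eq[OF two nz(1-4) n1(1,2)] G by blast
    have "(z1, z2) \<in> D" "(w1, w2) \<in> D" unfolding D_def using nz n1 o by auto
    thus "\<not> inj_on rho D" using r n1(5) unfolding inj_on_def by blast
  next
    assume "\<not> inj_on rho D"
    then obtain z1 z2 w1 w2 where inD: "(z1, z2) \<in> D" "(w1, w2) \<in> D"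
      and r: "rho (z1, z2) = rho (w1, w2)" and ne: "(z1, z2) \<noteq> (w1, w2)"
      unfolding inj_on_def by auto
    have nz: "z1 \<noteq> 0" "z2 \<noteq> 0" "w1 \<noteq> 0" "w2 \<noteq> 0" and n1: "z1 \<noteq> 1" "w1 \<noteq> 1" "z2 \<noteq> 1" "w2 \<noteq> 1"
      and o: "elem_ord z1 dvd q1" "elem_ord w1 dvd q1" "elem_ord z2 dvd q2" "elem_ord w2 dvd q2"
      using inD unfolding D_def by auto
    have E: "(1+z2)*z1*(1+w1)*w2 = (1+w2)*w1*(1+z1)*z2"
      using rho_eq[OF two nz n1(1,2)] r by blast
    have m_neg: "u = - u" for u :: 'a using two by (metis add_eq_0_iff2 mult_2 mult_zero_left)
    have z2w2: "z2 \<noteq> w2"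
    proof
      assume h: "z2 = w2"
      have "(1+z2)*z2*(z1-w1) = (1+z2)*z1*(1+w1)*z2 - (1+z2)*w1*(1+z1)*z2"
        by (simp add: algebra_simps)
      also have "\<dots> = 0" using E h by simp
      finally have "(1+z2)*z2*(z1-w1) = 0" .
      moreover have "1 + z2 \<noteq> 0" using n1(3) m_neg by (metis add_eq_0_iff2)
      ultimately have "z1 = w1" using nz by simp
      thus False using ne h by simp
    qed
    obtain a b c where abc: "a+b+c = 1" "a + b*z1 + c*w1 = 0" "a+b*z2+c*w2=0"
      "a + b*(z1*z2) + c*(w1*w2) = 0"
      using sys_bwd[OF two n1(1,2) z2w2 E] by blast
    have pq: "z1 ^ q1 = 1" "w1 ^ q1 = 1" "z2 ^ q2 = 1" "w2 ^ q2 = 1"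
      using elem_ord_pow_eq o q1g q2g by auto
    have "(z1 * z2) ^ m = 1" unfolding mq
      by (metis pq(1,3) power_mult power_mult_distrib mult.commute power_one mult_1)
    then obtain u where u: "z1 * z2 = \<gamma> ^ u" using gamma_powers[OF assms(12)] m1 by auto
    have "(w1 * w2) ^ m = 1" unfolding mq
      by (metis pq(2,4) power_mult power_mult_distrib mult.commute power_one mult_1)
    then obtain v where v: "w1 * w2 = \<gamma> ^ v" using gamma_powers[OF assms(12)] m1 by auto
    have xu: "x ^ u = z1" "y ^ u = z2"
    proof -
      have "x ^ u = (z1 * z2) ^ s10" unfolding x_def u by (simp add: power_mult[symmetric] mult.commute)
      thus "x ^ u = z1" using K1(1)[OF pq(1)] K2(1)[OF pq(3)] by (simp add: power_mult_distrib)
      have "y ^ u = (z1 * z2) ^ s01" unfolding y_def u by (simp add: power_mult[symmetric] mult.commute)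
      thus "y ^ u = z2" using K1(2)[OF pq(1)] K2(2)[OF pq(3)] by (simp add: power_mult_distrib)
    qed
    have xv: "x ^ v = w1" "y ^ v = w2"
    proof -
      have "x ^ v = (w1 * w2) ^ s10" unfolding x_def v by (simp add: power_mult[symmetric] mult.commute)
      thus "x ^ v = w1" using K1(1)[OF pq(2)] K2(1)[OF pq(4)] by (simp add: power_mult_distrib)
      have "y ^ v = (w1 * w2) ^ s01" unfolding y_def v by (simp add: power_mult[symmetric] mult.commute)
      thus "y ^ v = w2" using K1(2)[OF pq(2)] K2(2)[OF pq(4)] by (simp add: power_mult_distrib)
    qed
    define P where "P = monom a 0 + monom b u + monom c v"
    have ev: "poly P s = a + b * s ^ u + c * s ^ v" for s unfolding P_def by (simp add: poly_monom)
    have "\<forall>s\<in>canonical_set q1 q2. poly P (\<gamma> ^ s) = 0"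
    proof -
      have "poly P x = 0" "poly P y = 0" "poly P \<gamma> = 0" using ev abc xu xv u v by auto
      thus ?thesis unfolding CS x_def y_def by auto
    qed
    moreover have "poly P 1 = 1" using ev abc by simp
    ultimately have dec: "decoding_poly \<gamma> (canonical_set q1 q2) P" unfolding decoding_poly_def by blast
    have "{i. coeff P i \<noteq> 0} \<subseteq> {0, u, v}" unfolding P_def by (auto simp: coeff_monom)
    hence "card {i. coeff P i \<noteq> 0} \<le> card {0, u, v}" by (intro card_mono) auto
    also have "\<dots> \<le> 3" by (simp add: card_insert_if)
    finally have "num_monomials P < 4" unfolding num_monomials_def by simp
    thus "good \<gamma> q1 q2" unfolding good_def using dec by blast
  qed
  thus ?thesis unfolding q1_def q2_def D_def by simp
qed

end
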